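(* Let $n\ge 2$ and let $c=s_{n-1}s_{n-2}\cdots s_2s_1\in S_n$. For every $v\in S_n$ with $v\le c$ in the Bruhat order, one has $\mathcal I_v=\operatorname{in}_{\mathbf w}(\mathcal I_v)$.
   Context: Notation: $[a,b]=\{a,a+1,\dots,b\}$, $[b]=[1,b]$. $S_n$ is the symmetric group with simple reflections $s_i=(i,i+1)$ and Bruhat order $\le$. For $v\in S_n$ and $k\in[n]$ put $v([k])=\{v(1),\dots,v(k)\}$. For $k$-element subsets $I=\{a_1<\dots<a_k\}$, $K=\{b_1<\dots<b_k\}$ of $[n]$ write $I\le K$ iff $a_r\le b_r$ for all $r$. Let $A_n=\mathbb C[p_I : I\subseteq[n],\,1\le |I|\le n-1]$ (Plücker coordinates). For a sequence $I=(i_1,\dots,i_k)$ of pairwise distinct elements of $[n]$ set $p_I=\mathrm{sgn}(\sigma)\,p_{\{i_1,\dots,i_k\}}$, where $\sigma$ is the permutation sorting the sequence increasingly; if a sequence has repeated entries, $p_I=0$. Plücker relations: for sequences $J=(j_1,\dots,j_e)$, $L=(l_1,\dots,l_d)$ of distinct elements of $[n]$ with $1\le e\le d\le n-1$ and $k\in[e]$, $R^k_{J,L}=p_Jp_L-\sum_{1\le r_1<\dots<r_k\le d}p_{J'}p_{L'}$, where $J'$ is obtained from $J$ by replacing $j_t$ by $l_{r_t}$ ($t=1,\dots,k$) and $L'$ is obtained from $L$ by replacing $l_{r_t}$ by $j_t$. $\mathcal I_{\mathrm{Fl}_n}$ is the ideal generated by all $R^k_{J,L}$ (the ideal of the flag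 variety $\mathrm{Fl}_n$ in $\prod_{k=1}^{n-1}\mathbb P(\wedge^k\mathbb C^n)$), and for $v\in S_n$, $\mathcal I_v=\mathcal I_{\mathrm{Fl}_n}+(p_I : I\not\le v([|I|]))$ is the ideal of the Schubert variety $X_v=\overline{BvB/B}$. Weight vector: $\mathbf w_I=\#\{a\in I: |I|\le a\le n-1\}$; the weight of a monomial $\prod p_I^{\alpha_I}$ is $\sum\alpha_I\mathbf w_I$; for $f\in A_n$, $\operatorname{in}_{\mathbf w}(f)$ is the sum of the terms of $f$ of minimal weight, and for an ideal $\mathcal I$, $\operatorname{in}_{\mathbf w}(\mathcal I)$ is the ideal generated by all $\operatorname{in}_{\mathbf w}(f)$, $f\in\mathcal I$. *)

theory Defs
  imports "HOL-Library.Poly_Mapping" "HOL-Combinatorics.Combinatorics" Complex_Main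
begin

definition sref :: "nat \<Rightarrow> nat \<Rightarrow> nat" where
  "sref i = Transposition.transpose i (Suc i)"

definition sprod :: "nat list \<Rightarrow> nat \<Rightarrow> nat" where
  "sprod l = foldr (\<lambda>i f. sref i \<circ> f) l id"

definition coxc :: "nat \<Rightarrow> nat \<Rightarrow> nat" where
  "coxc n = sprod (rev [1..<n])"

definition inv_count :: "nat \<Rightarrow> (nat \<Rightarrow> nat) \<Rightarrow> nat" where
  "inv_count n u = card {(i, j). 1 \<le> i \<and> i < j \<and> j \<le> n \<and> u i > u j}"

definition bruhat_step :: "nat \<Rightarrow> (nat \<Rightarrow> nat) \<Rightarrow> (nat \<Rightarrow> nat) \<Rightarrow> bool" where
  "bruhat_step n u w \<longleftrightarrow> (\<exists>i j. 1 \<le> i \<and> i < j \<and> j \<le> n \<and>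
       w = u \<circ> Transposition.transpose i j \<and> inv_count n u < inv_count n w)"

definition bruhat_le :: "nat \<Rightarrow> (nat \<Rightarrow> nat) \<Rightarrow> (nat \<Rightarrow> nat) \<Rightarrow> bool" where
  "bruhat_le n = (bruhat_step n)\<^sup>*\<^sup>*"

definition gale_le :: "nat set \<Rightarrow> nat set \<Rightarrow> bool" where
  "gale_le I K \<longleftrightarrow> card I = card K \<and>
     (\<forall>r < card I. sorted_list_of_set I ! r \<le> sorted_list_of_set K ! r)"

type_synonym mono = "nat set \<Rightarrow>\<^sub>0 nat"
type_synonym cpoly = "mono \<Rightarrow>\<^sub>0 complex"

definition pvars :: "nat \<Rightarrow> nat set set" where
  "pvars n = {I. I \<subseteq> {1..n} \<and> 1 \<le> card I \<and> card I \<le> n - 1}"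

definition An :: "nat \<Rightarrow> cpoly set" where
  "An n = {f. \<forall>m \<in> Poly_Mapping.keys f. Poly_Mapping.keys m \<subseteq> pvars n}"

definition pvar :: "nat set \<Rightarrow> cpoly" where
  "pvar I = Poly_Mapping.single (Poly_Mapping.single I 1) 1"

definition ideal_gen :: "cpoly set \<Rightarrow> cpoly set \<Rightarrow> cpoly set" where
  "ideal_gen R S = {x. \<exists>F g. finite F \<and> F \<subseteq> S \<and> (\<forall>s\<in>F. g s \<in> R) \<and> x = (\<Sum>s\<in>F. g s * s)}"

text \<open>p_I for a sequence I: sign of the sorting permutation (= (-1)^#inversions) times p_{set I};
  zero if the sequence has repeated entries\<close>
definition list_inv :: "nat list \<Rightarrow> nat" where
  "list_inv l = card {(a, b). a < b \<and> b < length l \<and> l ! a > l ! b}"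

definition pseq :: "nat list \<Rightarrow> cpoly" where
  "pseq l = (if distinct l then (-1) ^ list_inv l * pvar (set l) else 0)"

text \<open>Pluecker relation R^k_{J,L}; R is the set of 0-based positions {r_1 < ... < r_k} in L\<close>
definition Jrep :: "nat list \<Rightarrow> nat list \<Rightarrow> nat \<Rightarrow> nat set \<Rightarrow> nat list" where
  "Jrep J L k R = map (\<lambda>t. L ! (sorted_list_of_set R ! t)) [0..<k] @ drop k J"

definition Lrep :: "nat list \<Rightarrow> nat list \<Rightarrow> nat \<Rightarrow> nat set \<Rightarrow> nat list" where
  "Lrep J L k R = foldr (\<lambda>t l. l[sorted_list_of_set R ! t := J ! t]) [0..<k] L"

definition plucker_rel :: "nat list \<Rightarrow> nat list \<Rightarrow> nat \<Rightarrow> cpoly" where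
  "plucker_rel J L k = pseq J * pseq L -
     (\<Sum>R\<in>{R. R \<subseteq> {0..<length L} \<and> card R = k}. pseq (Jrep J L k R) * pseq (Lrep J L k R))"

definition plucker_rels :: "nat \<Rightarrow> cpoly set" where
  "plucker_rels n = {plucker_rel J L k | J L k.
      distinct J \<and> distinct L \<and> set J \<subseteq> {1..n} \<and> set L \<subseteq> {1..n} \<and>
      1 \<le> length J \<and> length J \<le> length L \<and> length L \<le> n - 1 \<and>
      1 \<le> k \<and> k \<le> length J}"

definition I_Fl :: "nat \<Rightarrow> cpoly set" where
  "I_Fl n = ideal_gen (An n) (plucker_rels n)"

definition I_schubert :: "nat \<Rightarrow> (nat \<Rightarrow> nat) \<Rightarrow> cpoly set" where
  "I_schubert n v = ideal_gen (An n)
     (plucker_rels n \<union> {pvar I | I. I \<in> pvars n \<and> \<not> gale_le I (v ` {1..card I})})"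

definition wvar :: "nat \<Rightarrow> nat set \<Rightarrow> nat" where
  "wvar n I = card {a \<in> I. card I \<le> a \<and> a \<le> n - 1}"

definition wmono :: "nat \<Rightarrow> mono \<Rightarrow> nat" where
  "wmono n m = (\<Sum>I\<in>Poly_Mapping.keys m. Poly_Mapping.lookup m I * wvar n I)"

definition in_w :: "nat \<Rightarrow> cpoly \<Rightarrow> cpoly" where
  "in_w n f = Poly_Mapping.mapp
     (\<lambda>m a. if wmono n m = Min (wmono n ` Poly_Mapping.keys f) then a else 0) f"

definition in_w_ideal :: "nat \<Rightarrow> cpoly set \<Rightarrow> cpoly set" where
  "in_w_ideal n I = ideal_gen (An n) (in_w n ` I)"

end

theory Submission
  imports Defs
begin


lemma An_iff: "f \<in> An n \<longleftrightarrow> (\<forall>m\<in>Poly_Mapping.keys f. Poly_Mapping.keys m \<subseteq> pvars n)"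
  by (simp add: An_def)

lemma An_sub: "f \<in> An n \<Longrightarrow> Poly_Mapping.keys g \<subseteq> Poly_Mapping.keys f \<Longrightarrow> g \<in> An n"
  unfolding An_iff by (meson subsetD)

lemma An_add: "f \<in> An n \<Longrightarrow> g \<in> An n \<Longrightarrow> f + g \<in> An n"
proof -
  assume f: "f \<in> An n" and g: "g \<in> An n"
  show ?thesis unfolding An_iff
  proof
    fix m assume "m \<in> Poly_Mapping.keys (f + g)"
    with keys_add[of f g] have "m \<in> Poly_Mapping.keys f \<or> m \<in> Poly_Mapping.keys g" by auto
    then show "Poly_Mapping.keys m \<subseteq> pvars n" using f g unfolding An_iff by auto
  qed
qed
lemma An_uminus: "f \<in> An n \<Longrightarrow> - f \<in> An n"
  unfolding An_iff by (simp add: keys_minus)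
lemma An_zero: "0 \<in> An n" unfolding An_def by simp
lemma An_one: "1 \<in> An n" unfolding An_def by simp
lemma An_mult: "f \<in> An n \<Longrightarrow> g \<in> An n \<Longrightarrow> f * g \<in> An n"
proof -
  assume f: "f \<in> An n" and g: "g \<in> An n"
  show ?thesis unfolding An_iff
  proof
    fix m assume "m \<in> Poly_Mapping.keys (f * g)"
    with keys_mult[of f g] obtain a b where ab: "m = a + b" "a \<in> Poly_Mapping.keys f" "b \<in> Poly_Mapping.keys g"
      by auto
    have "Poly_Mapping.keys m \<subseteq> Poly_Mapping.keys a \<union> Poly_Mapping.keys b"
      unfolding ab(1) by (rule keys_add)
    moreover have "Poly_Mapping.keys a \<subseteq> pvars n" using f ab(2) unfolding An_iff by auto
    moreover have "Poly_Mapping.keys b \<subseteq> pvars n" using g ab(3) unfolding An_iff by auto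
    ultimately show "Poly_Mapping.keys m \<subseteq> pvars n" by auto
  qed
qed

lemma ig_zero: "0 \<in> ideal_gen R S"
  unfolding ideal_gen_def by (rule CollectI, rule exI[of _ "{}"], rule exI[of _ "\<lambda>_. 0"]) simp

lemma ig_gen: "s \<in> S \<Longrightarrow> g \<in> R \<Longrightarrow> g * s \<in> ideal_gen R S"
  unfolding ideal_gen_def by (rule CollectI, rule exI[of _ "{s}"], rule exI[of _ "\<lambda>_. g"]) simp

lemma ig_add:
  assumes "a \<in> ideal_gen (An n) S" "b \<in> ideal_gen (An n) S"
  shows "a + b \<in> ideal_gen (An n) S"
proof -
  obtain F g where F: "finite F" "F \<subseteq> S" "\<forall>s\<in>F. g s \<in> An n" "a = (\<Sum>s\<in>F. g s * s)"
    using assms(1) unfolding ideal_gen_def by blast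
  obtain G h where G: "finite G" "G \<subseteq> S" "\<forall>s\<in>G. h s \<in> An n" "b = (\<Sum>s\<in>G. h s * s)"
    using assms(2) unfolding ideal_gen_def by blast
  define k where "k s = (if s \<in> F then g s else 0) + (if s \<in> G then h s else 0)" for s
  have "(\<Sum>s\<in>F \<union> G. k s * s) = (\<Sum>s\<in>F \<union> G. (if s \<in> F then g s * s else 0)) + (\<Sum>s\<in>F \<union> G. (if s \<in> G then h s * s else 0))"
    unfolding sum.distrib[symmetric] by (rule sum.cong) (auto simp: k_def distrib_right)
  also have "(\<Sum>s\<in>F \<union> G. (if s \<in> F then g s * s else 0)) = a"
    using F G by (simp add: sum.If_cases Int_absorb1)
  also have "(\<Sum>s\<in>F \<union> G. (if s \<in> G then h s * s else 0)) = b"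
    using F G by (simp add: sum.If_cases Int_absorb2)
  finally have e: "a + b = (\<Sum>s\<in>F \<union> G. k s * s)" by simp
  have "\<forall>s\<in>F \<union> G. k s \<in> An n" using F G unfolding k_def by (auto intro!: An_add An_zero)
  then show ?thesis unfolding ideal_gen_def using e F G by (intro CollectI exI[of _ "F \<union> G"] exI[of _ k]) auto
qed

lemma ig_mult:
  assumes "a \<in> ideal_gen (An n) S" "h \<in> An n"
  shows "h * a \<in> ideal_gen (An n) S"
proof -
  obtain F g where F: "finite F" "F \<subseteq> S" "\<forall>s\<in>F. g s \<in> An n" "a = (\<Sum>s\<in>F. g s * s)"
    using assms(1) unfolding ideal_gen_def by blast
  have "h * a = (\<Sum>s\<in>F. (h * g s) * s)" using F(4) by (simp add: sum_distrib_left mult.assoc)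
  moreover have "\<forall>s\<in>F. h * g s \<in> An n" using F(3) assms(2) An_mult by blast
  ultimately show ?thesis unfolding ideal_gen_def using F by (intro CollectI exI[of _ F] exI[of _ "\<lambda>s. h * g s"]) auto
qed

lemma ig_uminus: "a \<in> ideal_gen (An n) S \<Longrightarrow> - a \<in> ideal_gen (An n) S"
  using ig_mult[of a n S "-1"] An_uminus[OF An_one] by simp

lemma ig_diff: "a \<in> ideal_gen (An n) S \<Longrightarrow> b \<in> ideal_gen (An n) S \<Longrightarrow> a - b \<in> ideal_gen (An n) S"
  using ig_add[of a n S "-b"] ig_uminus by simp

lemma ig_sum: "finite A \<Longrightarrow> (\<And>x. x \<in> A \<Longrightarrow> f x \<in> ideal_gen (An n) S) \<Longrightarrow> (\<Sum>x\<in>A. f x) \<in> ideal_gen (An n) S"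
  by (induction A rule: finite_induct) (auto intro: ig_add ig_zero)

lemma ig_mono:
  assumes "S \<subseteq> ideal_gen (An n) T"
  shows "ideal_gen (An n) S \<subseteq> ideal_gen (An n) T"
proof
  fix x assume "x \<in> ideal_gen (An n) S"
  then obtain F g where F: "finite F" "F \<subseteq> S" "\<forall>s\<in>F. g s \<in> An n" "x = (\<Sum>s\<in>F. g s * s)"
    unfolding ideal_gen_def by blast
  show "x \<in> ideal_gen (An n) T" unfolding F(4)
  proof (rule ig_sum[OF F(1)])
    fix s assume "s \<in> F"
    then show "g s * s \<in> ideal_gen (An n) T" using F assms ig_mult[of s n T "g s"] by auto
  qed
qed



definition hc :: "nat \<Rightarrow> nat \<Rightarrow> cpoly \<Rightarrow> cpoly" where
  "hc n d f = Poly_Mapping.mapp (\<lambda>m a. if wmono n m = d then a else 0) f"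

lemma lookup_hc: "Poly_Mapping.lookup (hc n d f) m = (if wmono n m = d then Poly_Mapping.lookup f m else 0)"
  unfolding hc_def lookup_mapp by (auto simp: when_def in_keys_iff)

lemma keys_hc: "Poly_Mapping.keys (hc n d f) = {m \<in> Poly_Mapping.keys f. wmono n m = d}"
  by (auto simp: in_keys_iff lookup_hc split: if_splits)

lemma in_w_hc: "in_w n f = hc n (Min (wmono n ` Poly_Mapping.keys f)) f"
  unfolding in_w_def hc_def ..

lemma hc_add: "hc n d (f + g) = hc n d f + hc n d g"
  by (rule poly_mapping_eqI) (simp add: lookup_hc lookup_add)

lemma hc_diff: "hc n d (f - g) = hc n d f - hc n d g"
  by (rule poly_mapping_eqI) (simp add: lookup_hc lookup_minus)

lemma hc_sum: "hc n d (\<Sum>x\<in>A. f x) = (\<Sum>x\<in>A. hc n d (f x))"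
  by (rule poly_mapping_eqI) (simp add: lookup_hc lookup_sum)

lemma hc_id: "(\<forall>m\<in>Poly_Mapping.keys f. wmono n m = d) \<Longrightarrow> hc n d f = f"
  by (rule poly_mapping_eqI) (auto simp add: lookup_hc in_keys_iff)

lemma hc_zero: "(\<forall>m\<in>Poly_Mapping.keys f. wmono n m \<noteq> d) \<Longrightarrow> hc n d f = 0"
  by (rule poly_mapping_eqI) (auto simp add: lookup_hc in_keys_iff)

lemma hc_hc: "hc n d (hc n d f) = hc n d f"
  by (rule poly_mapping_eqI) (simp add: lookup_hc)

lemma wmono_sum_superset:
  assumes "finite S" "Poly_Mapping.keys m \<subseteq> S"
  shows "wmono n m = (\<Sum>I\<in>S. Poly_Mapping.lookup m I * wvar n I)"
  unfolding wmono_def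
  by (rule sum.mono_neutral_left) (use assms in \<open>auto simp: in_keys_iff\<close>)

lemma wmono_add: "wmono n (a + b) = wmono n a + wmono n b"
proof -
  let ?S = "Poly_Mapping.keys a \<union> Poly_Mapping.keys b"
  have f: "finite ?S" by simp
  have "wmono n (a + b) = (\<Sum>I\<in>?S. Poly_Mapping.lookup (a+b) I * wvar n I)"
    by (rule wmono_sum_superset[OF f]) (rule keys_add)
  also have "\<dots> = (\<Sum>I\<in>?S. Poly_Mapping.lookup a I * wvar n I) + (\<Sum>I\<in>?S. Poly_Mapping.lookup b I * wvar n I)"
    by (simp add: lookup_add distrib_right sum.distrib)
  also have "\<dots> = wmono n a + wmono n b"
    using wmono_sum_superset[OF f, of a n] wmono_sum_superset[OF f, of b n] by auto
  finally show ?thesis .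
qed

lemma wmono_single: "wmono n (Poly_Mapping.single I k) = k * wvar n I"
  unfolding wmono_def by simp

lemma hc_mult_homog:
  assumes g: "\<forall>m\<in>Poly_Mapping.keys g. wmono n m = e"
  shows "hc n d (f * g) = (if e \<le> d then hc n (d - e) f * g else 0)"
proof (cases "e \<le> d")
  case True
  define h where "h = hc n (d - e) f"
  have f: "f = h + (f - h)" by simp
  have k1: "\<forall>m\<in>Poly_Mapping.keys (h * g). wmono n m = d"
  proof
    fix m assume "m \<in> Poly_Mapping.keys (h * g)"
    with keys_mult[of h g] obtain a b where "m = a + b" "a \<in> Poly_Mapping.keys h" "b \<in> Poly_Mapping.keys g" by auto
    then show "wmono n m = d" using g True by (simp add: wmono_add h_def keys_hc)
  qed
  have k2: "\<forall>m\<in>Poly_Mapping.keys ((f - h) * g). wmono n m \<noteq> d"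
  proof
    fix m assume "m \<in> Poly_Mapping.keys ((f - h) * g)"
    with keys_mult[of "f - h" g] obtain a b where ab: "m = a + b" "a \<in> Poly_Mapping.keys (f - h)" "b \<in> Poly_Mapping.keys g" by auto
    have "wmono n a \<noteq> d - e" using ab(2) by (auto simp: h_def in_keys_iff lookup_minus lookup_hc)
    then show "wmono n m \<noteq> d" using g True ab by (auto simp add: wmono_add)
  qed
  have "hc n d (f * g) = hc n d (h * g) + hc n d ((f - h) * g)"
  proof -
    have "f * g = h * g + (f - h) * g" by (simp add: algebra_simps)
    then show ?thesis by (simp add: hc_add)
  qed
  also have "\<dots> = h * g" using hc_id[OF k1] hc_zero[OF k2] by simp
  finally show ?thesis using True h_def by simp
next
  case False
  have "\<forall>m\<in>Poly_Mapping.keys (f * g). wmono n m \<noteq> d"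
  proof
    fix m assume "m \<in> Poly_Mapping.keys (f * g)"
    with keys_mult[of f g] obtain a b where ab: "m = a + b" "b \<in> Poly_Mapping.keys g" by auto
    then show "wmono n m \<noteq> d" using g False by (auto simp add: wmono_add)
  qed
  then show ?thesis using False hc_zero by simp
qed

lemma hc_decomp:
  assumes "finite D" "wmono n ` Poly_Mapping.keys f \<subseteq> D"
  shows "f = (\<Sum>d\<in>D. hc n d f)"
proof (rule poly_mapping_eqI)
  fix m
  have "(\<Sum>d\<in>D. Poly_Mapping.lookup (hc n d f) m) = (\<Sum>d\<in>D. if wmono n m = d then Poly_Mapping.lookup f m else 0)"
    by (simp add: lookup_hc)
  also have "\<dots> = (if wmono n m \<in> D then Poly_Mapping.lookup f m else 0)"
    using assms(1) by (simp add: sum.delta)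
  also have "\<dots> = Poly_Mapping.lookup f m"
    using assms(2) by (metis (mono_tags) image_subset_iff in_keys_iff)
  finally show "Poly_Mapping.lookup f m = Poly_Mapping.lookup (\<Sum>d\<in>D. hc n d f) m"
    by (simp add: lookup_sum)
qed

lemma in_w_of_homog: "in_w n (hc n d f) = hc n d f"
proof (cases "hc n d f = 0")
  case True
  then show ?thesis by (simp add: in_w_def poly_mapping_eq_iff lookup_mapp fun_eq_iff)
next
  case False
  then have ne: "Poly_Mapping.keys (hc n d f) \<noteq> {}" by simp
  have "wmono n ` Poly_Mapping.keys (hc n d f) = {d}" using ne by (auto simp: keys_hc)
  then show ?thesis by (simp add: in_w_hc hc_hc)
qed

definition homog :: "nat \<Rightarrow> cpoly \<Rightarrow> bool" where
  "homog n s \<longleftrightarrow> (\<exists>e. \<forall>m\<in>Poly_Mapping.keys s. wmono n m = e)"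

lemma hc_An: "f \<in> An n \<Longrightarrow> hc n d f \<in> An n"
  by (rule An_sub) (auto simp: keys_hc)

lemma ig_homog_hc:
  assumes "\<forall>s\<in>S. homog n s" "f \<in> ideal_gen (An n) S"
  shows "hc n d f \<in> ideal_gen (An n) S"
proof -
  obtain F g where F: "finite F" "F \<subseteq> S" "\<forall>s\<in>F. g s \<in> An n" "f = (\<Sum>s\<in>F. g s * s)"
    using assms(2) unfolding ideal_gen_def by blast
  have "hc n d f = (\<Sum>s\<in>F. hc n d (g s * s))" unfolding F(4) by (rule hc_sum)
  also have "\<dots> \<in> ideal_gen (An n) S"
  proof (rule ig_sum[OF F(1)])
    fix s assume s: "s \<in> F"
    then obtain e where e: "\<forall>m\<in>Poly_Mapping.keys s. wmono n m = e" using assms(1) F(2) unfolding homog_def by blast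
    show "hc n d (g s * s) \<in> ideal_gen (An n) S"
      unfolding hc_mult_homog[OF e]
      using s F(2,3) by (auto intro!: ig_gen hc_An ig_zero)
  qed
  finally show ?thesis .
qed

theorem abstract_main:
  assumes S: "\<forall>s\<in>S. homog n s"
  shows "ideal_gen (An n) S = in_w_ideal n (ideal_gen (An n) S)"
proof
  let ?I = "ideal_gen (An n) S"
  show "?I \<subseteq> in_w_ideal n ?I"
  proof
    fix f assume f: "f \<in> ?I"
    let ?D = "wmono n ` Poly_Mapping.keys f"
    have "f = (\<Sum>d\<in>?D. hc n d f)" by (rule hc_decomp) auto
    also have "\<dots> \<in> in_w_ideal n ?I"
      unfolding in_w_ideal_def
    proof (rule ig_sum)
      fix d
      have "hc n d f \<in> in_w n ` ?I"
        using ig_homog_hc[OF S f, of d] in_w_of_homog[of n d f] by (metis image_eqI)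
      then show "hc n d f \<in> ideal_gen (An n) (in_w n ` ?I)"
        using ig_gen[OF _ An_one, of "hc n d f" "in_w n ` ?I" n] by simp
    qed simp
    finally show "f \<in> in_w_ideal n ?I" .
  qed
  show "in_w_ideal n ?I \<subseteq> ?I"
    unfolding in_w_ideal_def
  proof (rule ig_mono, rule subsetI)
    fix x assume "x \<in> in_w n ` ?I"
    then obtain f where f: "f \<in> ?I" "x = in_w n f" by blast
    show "x \<in> ?I"
      using ig_homog_hc[OF S f(1)] f(2) by (simp add: in_w_hc)
  qed
qed



lemma pseq_distinct: "distinct X \<Longrightarrow> pseq X = Poly_Mapping.single (Poly_Mapping.single (set X) 1) ((-1) ^ list_inv X)"
  unfolding pseq_def pvar_def
  by (cases "even (list_inv X)") (simp_all add: single_uminus)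

lemma keys_pp:
  "Poly_Mapping.keys (pseq X * pseq Y) \<subseteq>
     (if distinct X \<and> distinct Y then {Poly_Mapping.single (set X) 1 + Poly_Mapping.single (set Y) 1} else {})"
proof (cases "distinct X \<and> distinct Y")
  case True
  then show ?thesis by (simp add: pseq_distinct mult_single)
next
  case False
  then have "pseq X * pseq Y = 0" by (auto simp: pseq_def)
  then show ?thesis by simp
qed

lemma keys_sum_sub: "Poly_Mapping.keys (\<Sum>x\<in>A. f x) \<subseteq> (\<Union>x\<in>A. Poly_Mapping.keys (f x))"
proof (cases "finite A")
  case True
  then show ?thesis
  proof (induction A rule: finite_induct)
    case empty then show ?case by simp
  next
    case (insert a A)
    then show ?case using keys_add[of "f a" "\<Sum>x\<in>A. f x"] by auto
  qed
qed simp

lemma foldr_upd_mset: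
  "(\<forall>t<k. p t < length L0) \<Longrightarrow> (\<forall>t<k. \<forall>t'<k. p t = p t' \<longrightarrow> t = t') \<Longrightarrow>
   mset (foldr (\<lambda>t l. l[p t := J!t]) [0..<k] L0) + mset (map (\<lambda>t. L0 ! p t) [0..<k])
     = mset L0 + mset (map (\<lambda>t. J!t) [0..<k])"
proof (induction k arbitrary: L0)
  case 0
  then show ?case by simp
next
  case (Suc k)
  define L1 where "L1 = L0[p k := J!k]"
  have pk: "p k < length L0" using Suc.prems by simp
  have IH: "mset (foldr (\<lambda>t l. l[p t := J!t]) [0..<k] L1) + mset (map (\<lambda>t. L1 ! p t) [0..<k])
     = mset L1 + mset (map (\<lambda>t. J!t) [0..<k])"
    using Suc.prems by (intro Suc.IH) (auto simp: L1_def)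
  have m: "map (\<lambda>t. L1 ! p t) [0..<k] = map (\<lambda>t. L0 ! p t) [0..<k]"
  proof (rule map_cong[OF refl])
    fix t assume "t \<in> set [0..<k]"
    then have "t < k" by simp
    then have "p t \<noteq> p k" using Suc.prems(2) by (metis less_Suc_eq less_irrefl)
    then show "L1 ! p t = L0 ! p t" by (simp add: L1_def)
  qed
  have ml1: "mset L1 + {#L0 ! p k#} = mset L0 + {#J ! k#}"
    using pk by (simp add: L1_def mset_update insert_DiffM nth_mem)
  have "mset (foldr (\<lambda>t l. l[p t := J!t]) [0..<Suc k] L0) + mset (map (\<lambda>t. L0 ! p t) [0..<Suc k])
      = (mset (foldr (\<lambda>t l. l[p t := J!t]) [0..<k] L1) + mset (map (\<lambda>t. L1 ! p t) [0..<k])) + {#L0 ! p k#}"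
  proof -
    have e1: "foldr (\<lambda>t l. l[p t := J!t]) [0..<Suc k] L0 = foldr (\<lambda>t l. l[p t := J!t]) [0..<k] L1"
      by (simp add: L1_def)
    have e2: "map (\<lambda>t. L0 ! p t) [0..<Suc k] = map (\<lambda>t. L1 ! p t) [0..<k] @ [L0 ! p k]"
      using m by simp
    show ?thesis unfolding e1 e2 mset_append by (simp add: ac_simps)
  qed
  also have "\<dots> = mset L1 + {#L0 ! p k#} + mset (map (\<lambda>t. J!t) [0..<k])" using IH by simp
  also have "\<dots> = mset L0 + mset (map (\<lambda>t. J!t) [0..<Suc k])" using ml1 by simp
  finally show ?case .
qed

lemma foldr_upd_length: "length (foldr (\<lambda>t l. l[p t := J!t]) ts L0) = length L0"
  by (induction ts) auto

lemma map_nth_take: "k \<le> length J \<Longrightarrow> map (\<lambda>t. J!t) [0..<k] = take k J"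
  by (rule nth_equalityI) auto

lemma rep_facts:
  assumes R: "R \<subseteq> {0..<length L}" "card R = k" and kJ: "k \<le> length J"
  shows "mset (Jrep J L k R @ Lrep J L k R) = mset (J @ L)"
    and "length (Jrep J L k R) = length J" and "length (Lrep J L k R) = length L"
proof -
  define p where "p t = sorted_list_of_set R ! t" for t
  have fin: "finite R" using R(1) finite_subset by blast
  have len: "length (sorted_list_of_set R) = k" using R(2) by simp
  have pL: "\<forall>t<k. p t < length L"
  proof (intro allI impI)
    fix t assume "t < k"
    then have "p t \<in> set (sorted_list_of_set R)" unfolding p_def using len by simp
    then show "p t < length L" using fin R(1) by auto
  qed
  have pinj: "\<forall>t<k. \<forall>t'<k. p t = p t' \<longrightarrow> t = t'"
    unfolding p_def using len distinct_sorted_list_of_set[of R] nth_eq_iff_index_eq by blast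
  have Lr: "Lrep J L k R = foldr (\<lambda>t l. l[p t := J!t]) [0..<k] L"
    unfolding Lrep_def p_def ..
  have Jr: "Jrep J L k R = map (\<lambda>t. L ! p t) [0..<k] @ drop k J"
    unfolding Jrep_def p_def ..
  have F: "mset (Lrep J L k R) + mset (map (\<lambda>t. L ! p t) [0..<k]) = mset L + mset (take k J)"
    unfolding Lr using foldr_upd_mset[OF pL pinj, of J] map_nth_take[OF kJ] by simp
  have "mset J = mset (take k J) + mset (drop k J)"
    by (metis append_take_drop_id mset_append)
  then show "mset (Jrep J L k R @ Lrep J L k R) = mset (J @ L)"
    unfolding Jr using F by (simp add: ac_simps)
  show "length (Jrep J L k R) = length J" unfolding Jr using kJ by simp
  show "length (Lrep J L k R) = length L" unfolding Lr by (rule foldr_upd_length)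
qed

definition okp :: "nat \<Rightarrow> nat list \<Rightarrow> nat list \<Rightarrow> nat list \<Rightarrow> nat list \<Rightarrow> bool" where
  "okp n J L X Y \<longleftrightarrow> distinct X \<and> distinct Y \<and> 1 \<le> length X \<and> length X \<le> n - 1 \<and>
     1 \<le> length Y \<and> length Y \<le> n - 1 \<and> mset (X @ Y) = mset (J @ L)"

lemma plucker_keys:
  assumes "distinct J" "distinct L" "1 \<le> length J" "length J \<le> length L" "length L \<le> n - 1"
    "1 \<le> k" "k \<le> length J"
    and m: "m \<in> Poly_Mapping.keys (plucker_rel J L k)"
  shows "\<exists>X Y. okp n J L X Y \<and> m = Poly_Mapping.single (set X) 1 + Poly_Mapping.single (set Y) 1"
proof -
  let ?Rs = "{R. R \<subseteq> {0..<length L} \<and> card R = k}"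
  have "m \<in> Poly_Mapping.keys (pseq J * pseq L) \<or>
        m \<in> Poly_Mapping.keys (\<Sum>R\<in>?Rs. pseq (Jrep J L k R) * pseq (Lrep J L k R))"
    using m keys_diff[of "pseq J * pseq L" "\<Sum>R\<in>?Rs. pseq (Jrep J L k R) * pseq (Lrep J L k R)"]
    unfolding plucker_rel_def by (simp only: Un_iff subset_iff)
  then show ?thesis
  proof
    assume mJ: "m \<in> Poly_Mapping.keys (pseq J * pseq L)"
    have "Poly_Mapping.keys (pseq J * pseq L) \<subseteq> {Poly_Mapping.single (set J) 1 + Poly_Mapping.single (set L) 1}"
      using keys_pp[of J L] assms(1,2) by simp
    then have "m = Poly_Mapping.single (set J) 1 + Poly_Mapping.single (set L) 1"
      using mJ by blast
    moreover have "okp n J L J L" unfolding okp_def using assms(1-5) by simp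
    ultimately show ?thesis by blast
  next
    assume mS: "m \<in> Poly_Mapping.keys (\<Sum>R\<in>?Rs. pseq (Jrep J L k R) * pseq (Lrep J L k R))"
    then obtain R where R: "R \<in> ?Rs" "m \<in> Poly_Mapping.keys (pseq (Jrep J L k R) * pseq (Lrep J L k R))"
    proof -
      have "m \<in> (\<Union>R\<in>?Rs. Poly_Mapping.keys (pseq (Jrep J L k R) * pseq (Lrep J L k R)))"
        using subsetD[OF keys_sum_sub[of "\<lambda>R. pseq (Jrep J L k R) * pseq (Lrep J L k R)" ?Rs] mS] .
      then show ?thesis using that by (elim UN_E)
    qed
    let ?X = "Jrep J L k R" and ?Y = "Lrep J L k R"
    have kp: "Poly_Mapping.keys (pseq ?X * pseq ?Y) \<subseteq> (if distinct ?X \<and> distinct ?Y then {Poly_Mapping.single (set ?X) 1 + Poly_Mapping.single (set ?Y) 1} else {})"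
      by (rule keys_pp)
    have d: "distinct ?X \<and> distinct ?Y"
    proof (rule ccontr)
      assume nd: "\<not> (distinct ?X \<and> distinct ?Y)"
      have "Poly_Mapping.keys (pseq ?X * pseq ?Y) \<subseteq> {}" using kp by (simp only: if_not_P[OF nd])
      then show False using R(2) by blast
    qed
    then have "Poly_Mapping.keys (pseq ?X * pseq ?Y) \<subseteq> {Poly_Mapping.single (set ?X) 1 + Poly_Mapping.single (set ?Y) 1}"
      using kp by simp
    then have mm: "m = Poly_Mapping.single (set ?X) 1 + Poly_Mapping.single (set ?Y) 1"
      using R(2) by blast
    have f: "mset (?X @ ?Y) = mset (J @ L)" "length ?X = length J" "length ?Y = length L"
      using rep_facts[of R L k J] R(1) assms(7) by auto
    have "okp n J L ?X ?Y" unfolding okp_def using d f assms(1-5) by simp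
    then show ?thesis using mm by blast
  qed
qed



lemma coxc_Suc: "1 \<le> n \<Longrightarrow> coxc (Suc n) = sref n \<circ> coxc n"
proof -
  assume "1 \<le> n"
  then have "[1..<Suc n] = [1..<n] @ [n]" by simp
  then have "rev [1..<Suc n] = n # rev [1..<n]" by simp
  then show ?thesis unfolding coxc_def sprod_def by simp
qed

lemma coxc_vals: "1 \<le> n \<Longrightarrow> (\<forall>m>n. coxc n m = m) \<and> (\<forall>t. 1 \<le> t \<and> t < n \<longrightarrow> coxc n (Suc t) = t)"
proof (induction n rule: nat_induct_at_least)
  case base
  then show ?case by (simp add: coxc_def sprod_def)
next
  case (Suc n)
  have c: "coxc (Suc n) x = sref n (coxc n x)" for x using coxc_Suc[OF Suc.hyps(1)] by simp
  show ?case
  proof (intro conjI allI impI)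
    fix m assume "Suc n < m"
    then show "coxc (Suc n) m = m" using Suc.IH c by (simp add: sref_def transpose_def)
  next
    fix t assume t: "1 \<le> t \<and> t < Suc n"
    show "coxc (Suc n) (Suc t) = t"
    proof (cases "t < n")
      case True
      then show ?thesis using Suc.IH c t by (simp add: sref_def transpose_def)
    next
      case False
      then have "t = n" using t by simp
      then show ?thesis using Suc.IH c by (simp add: sref_def transpose_def)
    qed
  qed
qed

definition Qp :: "nat \<Rightarrow> (nat \<Rightarrow> nat) \<Rightarrow> bool" where
  "Qp n f \<longleftrightarrow> (\<forall>k. 1 \<le> k \<and> k \<le> n \<longrightarrow> {1..k-1} \<subseteq> f ` {1..k})"

lemma Qp_coxc: "1 \<le> n \<Longrightarrow> Qp n (coxc n)"
  unfolding Qp_def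
proof (intro allI impI subsetI)
  fix k t assume n: "1 \<le> n" and k: "1 \<le> k \<and> k \<le> n" and t: "t \<in> {1..k-1}"
  have "coxc n (Suc t) = t" using coxc_vals[OF n] t k by auto
  moreover have "Suc t \<in> {1..k}" using t by auto
  ultimately show "t \<in> coxc n ` {1..k}" by (metis image_eqI)
qed

lemma Qp_step:
  assumes u: "u permutes {1..n}" and ij: "1 \<le> i" "i < j" "j \<le> n" and lt: "u i < u j"
    and Q: "Qp n (u \<circ> Transposition.transpose i j)"
  shows "Qp n u"
  unfolding Qp_def
proof (intro allI impI subsetI)
  fix k t assume k: "1 \<le> k \<and> k \<le> n" and t: "t \<in> {1..k-1}"
  let ?w = "u \<circ> Transposition.transpose i j"
  have inj: "inj_on u {1..n}" by (rule permutes_inj_on[OF u])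
  have uin: "x \<in> {1..n} \<Longrightarrow> u x \<in> {1..n}" for x using permutes_in_image[OF u] by simp
  have Qk: "{1..k-1} \<subseteq> ?w ` {1..k}" using Q k unfolding Qp_def by simp
  have "t \<in> ?w ` {1..k}" using subsetD[OF Qk t] .
  then obtain s where s: "s \<in> {1..k}" "t = ?w s" by (rule imageE) simp
  show "t \<in> u ` {1..k}"
  proof (cases "Transposition.transpose i j s \<in> {1..k}")
    case True
    then show ?thesis using s by (metis comp_apply image_eqI)
  next
    case False
    have si: "s = i"
    proof (rule ccontr)
      assume "s \<noteq> i"
      show False
      proof (cases "s = j")
        case True
        then have "Transposition.transpose i j s = i" by simp
        then show False using False ij s(1) True by simp
      next
        case False2: False
        then have "Transposition.transpose i j s = s" using \<open>s \<noteq> i\<close> by simp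
        then show False using False s(1) by simp
      qed
    qed
    then have jk: "j > k" using False ij by simp
    have tu: "t = u j" using s si by simp
    have "u i \<in> {1..n}" using uin[of i] ij by simp
    then have uik: "u i \<in> {1..k-1}" using lt tu t by simp
    have "u i \<in> ?w ` {1..k}" using subsetD[OF Qk uik] .
    then obtain s' where s': "s' \<in> {1..k}" "u i = ?w s'" by (rule imageE) simp
    have s'n: "s' \<in> {1..n}" using s' k by simp
    have tn: "Transposition.transpose i j s' \<in> {1..n}"
    proof -
      have "i \<in> {1..n}" "j \<in> {1..n}" using ij by auto
      then show ?thesis using s'n by (simp add: transpose_def)
    qed
    have "u (Transposition.transpose i j s') = u i" using s'(2) by simp
    moreover have "i \<in> {1..n}" using ij by simp
    ultimately have e: "Transposition.transpose i j s' = i"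
      using inj_onD[OF inj _ tn] by blast
    have "s' = j"
    proof (rule ccontr)
      assume "s' \<noteq> j"
      show False
      proof (cases "s' = i")
        case True
        then show False using e ij by simp
      next
        case False
        then show False using e \<open>s' \<noteq> j\<close> by simp
      qed
    qed
    then show ?thesis using s' jk by simp
  qed
qed



lemma inv_count_card: "inv_count n f = card {(a, b). 1 \<le> a \<and> a < b \<and> b \<le> n \<and> f a > f b}"
  unfolding inv_count_def ..

lemma inv_step_lt:
  assumes u: "u permutes {1..n}" and ij: "1 \<le> i" "i < j" "j \<le> n"
    and lt: "inv_count n u < inv_count n (u \<circ> Transposition.transpose i j)"
  shows "u i < u j"
proof (rule ccontr)
  assume nlt: "\<not> u i < u j"
  have inj: "inj_on u {1..n}" by (rule permutes_inj_on[OF u])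
  have "u i \<noteq> u j" using inj_onD[OF inj] ij by fastforce
  then have gt: "u j < u i" using nlt by simp
  let ?t = "Transposition.transpose i j"
  let ?w = "u \<circ> ?t"
  define Inv where "Inv f = {(a, b). 1 \<le> a \<and> a < b \<and> b \<le> n \<and> f a > f b}" for f :: "nat \<Rightarrow> nat"
  define sp where "sp a b \<longleftrightarrow> (a = i \<and> i < b \<and> b < j) \<or> (b = j \<and> i < a \<and> a < j)" for a b
  define phi where "phi p = (if sp (fst p) (snd p) then p else (?t (fst p), ?t (snd p)))" for p
  have tv: "?t x = (if x = i then j else if x = j then i else x)" for x by (simp add: transpose_def)
  have img: "phi ` Inv ?w \<subseteq> Inv u"
  proof
    fix q assume "q \<in> phi ` Inv ?w"
    then obtain a b where ab: "(a, b) \<in> Inv ?w" "q = phi (a, b)" by auto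
    have a: "1 \<le> a" "a < b" "b \<le> n" "u (?t a) > u (?t b)" using ab(1) unfolding Inv_def by auto
    show "q \<in> Inv u"
    proof (cases "sp a b")
      case True
      then have q: "q = (a, b)" using ab(2) unfolding phi_def by simp
      show ?thesis
      proof (cases "a = i \<and> i < b \<and> b < j")
        case True
        then have "?t a = j" "?t b = b" using tv by auto
        then have "u i > u b" using a gt True by simp
        then show ?thesis using q a True unfolding Inv_def by simp
      next
        case False
        then have c: "b = j \<and> i < a \<and> a < j" using \<open>sp a b\<close> unfolding sp_def by blast
        then have "?t a = a" "?t b = i" using tv by auto
        then have "u a > u j" using a gt c by simp
        then show ?thesis using q a c unfolding Inv_def by simp
      qed
    next
      case False
      then have q: "q = (?t a, ?t b)" using ab(2) unfolding phi_def by simp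
      have nij: "\<not> (a = i \<and> b = j)" using a gt by auto
      have lt2: "?t a < ?t b" using False nij a ij unfolding tv sp_def by auto
      have r: "1 \<le> ?t a" "?t b \<le> n" using a ij unfolding tv by auto
      show ?thesis using q lt2 r a unfolding Inv_def by simp
    qed
  qed
  have injphi: "inj_on phi (Inv ?w)"
  proof (rule inj_onI)
    fix p q assume p: "p \<in> Inv ?w" and q: "q \<in> Inv ?w" and e: "phi p = phi q"
    obtain a b where pab: "p = (a, b)" by (cases p)
    obtain c d where qcd: "q = (c, d)" by (cases q)
    have a: "a < b" using p pab unfolding Inv_def by auto
    have c: "c < d" using q qcd unfolding Inv_def by auto
    show "p = q"
    proof (cases "sp a b"; cases "sp c d")
      assume "sp a b" "sp c d"
      then show ?thesis using e pab qcd unfolding phi_def by simp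
    next
      assume s1: "sp a b" "\<not> sp c d"
      then have "a = ?t c" "b = ?t d" using e pab qcd unfolding phi_def by auto
      then show ?thesis using s1 c ij unfolding sp_def tv by (auto split: if_splits)
    next
      assume s1: "\<not> sp a b" "sp c d"
      then have "c = ?t a" "d = ?t b" using e pab qcd unfolding phi_def by auto
      then show ?thesis using s1 a ij unfolding sp_def tv by (auto split: if_splits)
    next
      assume s1: "\<not> sp a b" "\<not> sp c d"
      then have "?t a = ?t c" "?t b = ?t d" using e pab qcd unfolding phi_def by auto
      then show ?thesis using pab qcd unfolding tv by (auto split: if_splits)
    qed
  qed
  have fin: "finite (Inv u)"
  proof (rule finite_subset)
    show "Inv u \<subseteq> {1..n} \<times> {1..n}" unfolding Inv_def by auto
  qed simp
  have "card (Inv ?w) \<le> card (Inv u)" by (rule card_inj_on_le[OF injphi img fin])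
  then show False using lt unfolding inv_count_card Inv_def by simp
qed



lemma chain_Qp:
  assumes "bruhat_le n u w"
  shows "u permutes {1..n} \<Longrightarrow> w permutes {1..n} \<and> (Qp n w \<longrightarrow> Qp n u)"
  using assms unfolding bruhat_le_def
proof (induction rule: converse_rtranclp_induct)
  case base
  then show ?case by simp
next
  case (step y z)
  from step.hyps(1) obtain i j where ij: "1 \<le> i" "i < j" "j \<le> n"
    and z: "z = y \<circ> Transposition.transpose i j" and lt: "inv_count n y < inv_count n z"
    unfolding bruhat_step_def by blast
  have sw: "Transposition.transpose i j permutes {1..n}" using ij by (intro permutes_swap_id) auto
  have zp: "z permutes {1..n}" unfolding z by (rule permutes_compose[OF sw step.prems])
  have "y i < y j" using inv_step_lt[OF step.prems ij] lt z by simp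
  then have "Qp n z \<Longrightarrow> Qp n y" unfolding z by (rule Qp_step[OF step.prems ij])
  moreover have "w permutes {1..n} \<and> (Qp n w \<longrightarrow> Qp n z)" by (rule step.IH[OF zp])
  ultimately show ?case by blast
qed

lemma sorted_LB:
  assumes "finite A" "0 \<notin> A"
  shows "r < card A \<Longrightarrow> Suc r \<le> sorted_list_of_set A ! r"
proof (induction r)
  case 0
  then have "0 < length (sorted_list_of_set A)" by simp
  then have "sorted_list_of_set A ! 0 \<in> set (sorted_list_of_set A)" by (rule nth_mem)
  then have "sorted_list_of_set A ! 0 \<in> A" using assms(1) by simp
  then show ?case using assms(2) by (cases "sorted_list_of_set A ! 0") auto
next
  case (Suc r)
  have "sorted_list_of_set A ! r < sorted_list_of_set A ! Suc r"
    using sorted_wrt_nth_less[OF strict_sorted_list_of_set[of A], of r "Suc r"] Suc.prems by simp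
  then show ?case using Suc by simp
qed

lemma sorted_UB:
  assumes "finite A" "{1..Suc r} \<subseteq> A" "r < card A"
  shows "sorted_list_of_set A ! r \<le> Suc r"
proof (rule ccontr)
  assume big: "\<not> sorted_list_of_set A ! r \<le> Suc r"
  let ?s = "sorted_list_of_set A"
  have len: "length ?s = card A" by simp
  have sub: "{1..Suc r} \<subseteq> (\<lambda>t. ?s ! t) ` {0..<r}"
  proof
    fix y assume y: "y \<in> {1..Suc r}"
    then have "y \<in> set ?s" using assms by auto
    then obtain t where t: "t < length ?s" "?s ! t = y" by (auto simp: in_set_conv_nth)
    have "t < r"
    proof (rule ccontr)
      assume "\<not> t < r"
      then have "?s ! r \<le> ?s ! t" using sorted_nth_mono[OF sorted_sorted_list_of_set, of r t A] t by simp
      then show False using big t y by simp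
    qed
    then show "y \<in> (\<lambda>t. ?s ! t) ` {0..<r}" using t by auto
  qed
  have "Suc r = card {1..Suc r}" by simp
  also have "\<dots> \<le> card ((\<lambda>t. ?s ! t) ` {0..<r})" by (rule card_mono[OF _ sub]) simp
  also have "\<dots> \<le> card {0..<r}" by (rule card_image_le) simp
  finally show False by simp
qed

lemma good_prefix:
  assumes v: "v permutes {1..n}" and Q: "Qp n v" and I: "I \<in> pvars n"
    and g: "gale_le I (v ` {1..card I})"
  shows "{1..card I - 1} \<subseteq> I"
proof
  fix t assume t: "t \<in> {1..card I - 1}"
  define k where "k = card I"
  have Isub: "I \<subseteq> {1..n}" and k1: "1 \<le> k" and kn: "k \<le> n - 1" using I unfolding pvars_def k_def by auto
  have finI: "finite I" using Isub finite_subset by blast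
  let ?K = "v ` {1..k}"
  have KQ: "{1..k-1} \<subseteq> ?K" using Q k1 kn unfolding Qp_def by simp
  have injv: "inj_on v {1..k}" using permutes_inj_on[OF v] .
  have cK: "card ?K = k" using card_image[OF injv] by simp
  have finK: "finite ?K" by simp
  define r where "r = t - 1"
  have r: "r < k - 1" "Suc r = t" using t unfolding r_def k_def by auto
  have "sorted_list_of_set I ! r \<le> sorted_list_of_set ?K ! r"
    using g r unfolding gale_le_def k_def by simp
  also have "\<dots> \<le> Suc r"
    by (rule sorted_UB[OF finK]) (use KQ r cK in auto)
  finally have le: "sorted_list_of_set I ! r \<le> Suc r" .
  have "Suc r \<le> sorted_list_of_set I ! r"
    by (rule sorted_LB[OF finI]) (use Isub r k_def in auto)
  then have "sorted_list_of_set I ! r = t" using le r by simp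
  moreover have "r < length (sorted_list_of_set I)" using r unfolding k_def by simp
  then have "sorted_list_of_set I ! r \<in> set (sorted_list_of_set I)" by (rule nth_mem)
  ultimately show "t \<in> I" using finI by simp
qed

lemma good_wvar:
  assumes I: "I \<in> pvars n" and pre: "{1..card I - 1} \<subseteq> I"
  shows "wvar n I = (if n \<in> I then 0 else 1)"
proof -
  define k where "k = card I"
  have Isub: "I \<subseteq> {1..n}" and k1: "1 \<le> k" and kn: "k \<le> n - 1" using I unfolding pvars_def k_def by auto
  have finI: "finite I" using Isub finite_subset by blast
  have c1: "card (I - {1..k-1}) = 1"
    using card_Diff_subset[OF _ pre] finI k1 unfolding k_def by simp
  have e: "{a \<in> I. card I \<le> a \<and> a \<le> n - 1} = (I - {1..k-1}) - {n}"
    using Isub k1 unfolding k_def by auto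
  have nI: "n \<in> I \<longleftrightarrow> n \<in> I - {1..k-1}" using kn k1 by auto
  show ?thesis
    unfolding wvar_def e
    using c1 nI finI by (simp add: card_Diff_singleton_if)
qed



definition Bs :: "nat \<Rightarrow> (nat \<Rightarrow> nat) \<Rightarrow> nat set set" where
  "Bs n v = {I. I \<in> pvars n \<and> \<not> gale_le I (v ` {1..card I})}"

lemma self_in_ig: "s \<in> S \<Longrightarrow> s \<in> ideal_gen (An n) S"
  using ig_gen[OF _ An_one, of s S n] by simp

lemma poly_sum_monos: "p = (\<Sum>m\<in>Poly_Mapping.keys p. Poly_Mapping.single m (Poly_Mapping.lookup p m))"
proof (rule poly_mapping_eqI)
  fix x
  have "(\<Sum>m\<in>Poly_Mapping.keys p. Poly_Mapping.lookup (Poly_Mapping.single m (Poly_Mapping.lookup p m)) x)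
      = (\<Sum>m\<in>Poly_Mapping.keys p. if m = x then Poly_Mapping.lookup p m else 0)"
    by (rule sum.cong) (auto simp: lookup_single when_def)
  also have "\<dots> = Poly_Mapping.lookup p x" by (simp add: in_keys_iff)
  finally show "Poly_Mapping.lookup p x = Poly_Mapping.lookup (\<Sum>m\<in>Poly_Mapping.keys p. Poly_Mapping.single m (Poly_Mapping.lookup p m)) x"
    by (simp add: lookup_sum)
qed

lemma mono_split:
  assumes "I \<in> Poly_Mapping.keys m"
  shows "Poly_Mapping.single m c = Poly_Mapping.single (m - Poly_Mapping.single I 1) c * pvar I"
proof -
  have "m - Poly_Mapping.single I 1 + Poly_Mapping.single I 1 = m"
  proof (rule poly_mapping_eqI)
    fix J
    show "Poly_Mapping.lookup (m - Poly_Mapping.single I 1 + Poly_Mapping.single I 1) J = Poly_Mapping.lookup m J"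
      using assms by (cases "I = J") (auto simp: lookup_add lookup_minus lookup_single in_keys_iff)
  qed
  then show ?thesis unfolding pvar_def by (simp add: mult_single)
qed

lemma keys_minus_single: "Poly_Mapping.keys (m - Poly_Mapping.single I (1::nat)) \<subseteq> Poly_Mapping.keys m"
  by (auto simp: in_keys_iff lookup_minus)

lemma L1:
  assumes p: "p \<in> An n" and bad: "\<forall>m\<in>Poly_Mapping.keys p. \<exists>I\<in>Poly_Mapping.keys m. I \<in> Bs n v"
  shows "p \<in> ideal_gen (An n) {pvar I | I. I \<in> pvars n \<and> \<not> gale_le I (v ` {1..card I})}"
proof -
  let ?B = "{pvar I | I. I \<in> pvars n \<and> \<not> gale_le I (v ` {1..card I})}"
  have "(\<Sum>m\<in>Poly_Mapping.keys p. Poly_Mapping.single m (Poly_Mapping.lookup p m)) \<in> ideal_gen (An n) ?B"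
  proof (rule ig_sum)
    fix m assume m: "m \<in> Poly_Mapping.keys p"
    then obtain I where I: "I \<in> Poly_Mapping.keys m" "I \<in> Bs n v" using bad by blast
    have mpv: "Poly_Mapping.keys m \<subseteq> pvars n" using p m unfolding An_iff by blast
    have c: "Poly_Mapping.single (m - Poly_Mapping.single I 1) (Poly_Mapping.lookup p m) \<in> An n"
      unfolding An_iff using mpv keys_minus_single[of m I] by auto
    have g: "pvar I \<in> ?B" using I(2) unfolding Bs_def by blast
    show "Poly_Mapping.single m (Poly_Mapping.lookup p m) \<in> ideal_gen (An n) ?B"
      unfolding mono_split[OF I(1)] by (rule ig_gen[OF g c])
  qed simp
  then show ?thesis using poly_sum_monos[of p] by simp
qed

lemma rel_props:
  assumes v: "v permutes {1..n}" and Q: "Qp n v" and r: "r \<in> plucker_rels n"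
  shows "r \<in> An n \<and> (\<exists>d0. \<forall>m\<in>Poly_Mapping.keys r. (\<forall>I\<in>Poly_Mapping.keys m. I \<notin> Bs n v) \<longrightarrow> wmono n m = d0)"
proof -
  obtain J L k where rd: "r = plucker_rel J L k" and h: "distinct J" "distinct L" "set J \<subseteq> {1..n}" "set L \<subseteq> {1..n}"
      "1 \<le> length J" "length J \<le> length L" "length L \<le> n - 1" "1 \<le> k" "k \<le> length J"
    using r unfolding plucker_rels_def by blast
  have key: "\<exists>X Y. okp n J L X Y \<and> m = Poly_Mapping.single (set X) 1 + Poly_Mapping.single (set Y) 1"
    if "m \<in> Poly_Mapping.keys r" for m
    using plucker_keys[OF h(1,2,5,6,7,8,9)] that rd by simp
  have inpv: "set X \<in> pvars n" if "okp n J L X Y \<or> okp n J L Y X" for X Y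
  proof -
    have s: "set X \<subseteq> set (J @ L)"
    proof -
      have "mset (X @ Y) = mset (J @ L) \<or> mset (Y @ X) = mset (J @ L)" using that unfolding okp_def by blast
      then have "set (X @ Y) = set (J @ L) \<or> set (Y @ X) = set (J @ L)" by (metis set_mset_mset)
      then show ?thesis by auto
    qed
    have ok: "distinct X" "1 \<le> length X" "length X \<le> n - 1" "set X \<subseteq> set (J @ L)"
      using that s unfolding okp_def by auto
    then show ?thesis unfolding pvars_def using h(3,4) by (auto simp: distinct_card)
  qed
  have ks: "Poly_Mapping.keys (Poly_Mapping.single A (1::nat) + Poly_Mapping.single B 1) = {A, B}" for A B
    by (auto simp: in_keys_iff lookup_add lookup_single when_def split: if_splits)
  have An: "r \<in> An n" unfolding An_iff
  proof
    fix m assume "m \<in> Poly_Mapping.keys r"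
    then obtain X Y where XY: "okp n J L X Y" "m = Poly_Mapping.single (set X) 1 + Poly_Mapping.single (set Y) 1"
      using key by blast
    show "Poly_Mapping.keys m \<subseteq> pvars n" unfolding XY(2) ks using inpv XY(1) by blast
  qed
  define d0 where "d0 = 2 - count (mset (J @ L)) n"
  have "\<forall>m\<in>Poly_Mapping.keys r. (\<forall>I\<in>Poly_Mapping.keys m. I \<notin> Bs n v) \<longrightarrow> wmono n m = d0"
  proof (intro ballI impI)
    fix m assume m: "m \<in> Poly_Mapping.keys r" and gd: "\<forall>I\<in>Poly_Mapping.keys m. I \<notin> Bs n v"
    then obtain X Y where XY: "okp n J L X Y" "m = Poly_Mapping.single (set X) 1 + Poly_Mapping.single (set Y) 1"
      using key by blast
    have pX: "set X \<in> pvars n" and pY: "set Y \<in> pvars n" using inpv XY(1) by blast+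
    have gX: "set X \<notin> Bs n v" and gY: "set Y \<notin> Bs n v" using gd unfolding XY(2) ks by auto
    have wX: "wvar n (set X) = (if n \<in> set X then 0 else 1)"
      by (rule good_wvar[OF pX good_prefix[OF v Q pX]]) (use gX pX in \<open>simp add: Bs_def\<close>)
    have wY: "wvar n (set Y) = (if n \<in> set Y then 0 else 1)"
      by (rule good_wvar[OF pY good_prefix[OF v Q pY]]) (use gY pY in \<open>simp add: Bs_def\<close>)
    have dX: "distinct X" and dY: "distinct Y" and ms: "mset (X @ Y) = mset (J @ L)"
      using XY(1) unfolding okp_def by auto
    have cX: "count (mset X) n = (if n \<in> set X then 1 else 0)" using dX distinct_count_atmost_1 by metis
    have cY: "count (mset Y) n = (if n \<in> set Y then 1 else 0)" using dY distinct_count_atmost_1 by metis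
    have "count (mset (J @ L)) n = count (mset X) n + count (mset Y) n" unfolding ms[symmetric] by simp
    then have "d0 = 2 - ((if n \<in> set X then 1 else 0) + (if n \<in> set Y then 1 else 0))"
      unfolding d0_def cX cY by simp
    then show "wmono n m = d0" unfolding XY(2) wmono_add wmono_single wX wY by auto
  qed
  then show ?thesis using An by blast
qed

theorem main_thm:
  assumes v: "v permutes {1..n}" and Q: "Qp n v"
  shows "I_schubert n v = in_w_ideal n (I_schubert n v)"
proof -
  let ?P = "plucker_rels n"
  let ?B = "{pvar I | I. I \<in> pvars n \<and> \<not> gale_le I (v ` {1..card I})}"
  let ?H = "?B \<union> {hc n d r | r d. r \<in> ?P}"
  have homH: "\<forall>s\<in>?H. homog n s"
  proof
    fix s assume "s \<in> ?H"
    then show "homog n s"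
    proof
      assume "s \<in> ?B"
      then obtain I where "s = pvar I" by blast
      then show ?thesis unfolding homog_def pvar_def by simp
    next
      assume "s \<in> {hc n d r | r d. r \<in> ?P}"
      then obtain d r where "s = hc n d r" by blast
      then show ?thesis unfolding homog_def by (auto simp: keys_hc)
    qed
  qed
  have BinP: "ideal_gen (An n) ?B \<subseteq> ideal_gen (An n) (?P \<union> ?B)"
    by (rule ig_mono) (auto intro: self_in_ig)
  have H1: "?P \<union> ?B \<subseteq> ideal_gen (An n) ?H"
  proof
    fix s assume s: "s \<in> ?P \<union> ?B"
    show "s \<in> ideal_gen (An n) ?H"
    proof (cases "s \<in> ?B")
      case True
      then show ?thesis by (intro self_in_ig) blast
    next
      case False
      then have sP: "s \<in> ?P" using s by blast
      have "s = (\<Sum>d\<in>wmono n ` Poly_Mapping.keys s. hc n d s)" by (rule hc_decomp) auto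
      also have "\<dots> \<in> ideal_gen (An n) ?H"
      proof (rule ig_sum)
        fix d show "hc n d s \<in> ideal_gen (An n) ?H" using sP by (intro self_in_ig) blast
      qed simp
      finally show ?thesis .
    qed
  qed
  have H2: "?H \<subseteq> ideal_gen (An n) (?P \<union> ?B)"
  proof
    fix s assume s: "s \<in> ?H"
    show "s \<in> ideal_gen (An n) (?P \<union> ?B)"
    proof (cases "s \<in> ?B")
      case True
      then show ?thesis by (intro self_in_ig) blast
    next
      case False
      then obtain d r where sd: "s = hc n d r" and rP: "r \<in> ?P" using s by blast
      obtain d0 where rA: "r \<in> An n" and d0: "\<forall>m\<in>Poly_Mapping.keys r. (\<forall>I\<in>Poly_Mapping.keys m. I \<notin> Bs n v) \<longrightarrow> wmono n m = d0"
        using rel_props[OF v Q rP] by blast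
      have bad: "hc n d' r \<in> ideal_gen (An n) (?P \<union> ?B)" if "d' \<noteq> d0" for d'
      proof -
        have "hc n d' r \<in> ideal_gen (An n) ?B"
        proof (rule L1[where v = v])
          show "hc n d' r \<in> An n" by (rule hc_An[OF rA])
          show "\<forall>m\<in>Poly_Mapping.keys (hc n d' r). \<exists>I\<in>Poly_Mapping.keys m. I \<in> Bs n v"
            using d0 that by (auto simp: keys_hc)
        qed
        then show ?thesis using BinP by blast
      qed
      show ?thesis
      proof (cases "d = d0")
        case False
        then show ?thesis using bad sd by simp
      next
        case True
        let ?D = "insert d0 (wmono n ` Poly_Mapping.keys r)"
        have "r = (\<Sum>d\<in>?D. hc n d r)" by (rule hc_decomp) auto
        also have "\<dots> = hc n d0 r + (\<Sum>d\<in>?D - {d0}. hc n d r)" by (rule sum.remove) auto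
        finally have e: "hc n d0 r = r - (\<Sum>d\<in>?D - {d0}. hc n d r)" by (simp add: algebra_simps)
        have "r - (\<Sum>d\<in>?D - {d0}. hc n d r) \<in> ideal_gen (An n) (?P \<union> ?B)"
        proof (rule ig_diff)
          show "r \<in> ideal_gen (An n) (?P \<union> ?B)" using rP by (intro self_in_ig) blast
          show "(\<Sum>d\<in>?D - {d0}. hc n d r) \<in> ideal_gen (An n) (?P \<union> ?B)"
          proof (rule ig_sum)
            fix d assume "d \<in> ?D - {d0}"
            then show "hc n d r \<in> ideal_gen (An n) (?P \<union> ?B)" by (intro bad) simp
          qed simp
        qed
        then show ?thesis using e sd True by simp
      qed
    qed
  qed
  have eq: "I_schubert n v = ideal_gen (An n) ?H"
  proof
    show "I_schubert n v \<subseteq> ideal_gen (An n) ?H" unfolding I_schubert_def by (rule ig_mono[OF H1])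
    show "ideal_gen (An n) ?H \<subseteq> I_schubert n v" unfolding I_schubert_def by (rule ig_mono[OF H2])
  qed
  show ?thesis unfolding eq by (rule abstract_main[OF homH])
qed

theorem proposition3p4:
  fixes n :: nat and v :: "nat \<Rightarrow> nat"
  assumes "n \<ge> 2"
    and "v permutes {1..n}"
    and "bruhat_le n v (coxc n)"
  shows "I_schubert n v = in_w_ideal n (I_schubert n v)"
proof -
  have "Qp n (coxc n)" using assms(1) by (intro Qp_coxc) simp
  then have "Qp n v" using chain_Qp[OF assms(3,2)] by blast
  then show ?thesis using main_thm[OF assms(2)] by blast
qed

end
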